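(* For $n\ge5$, $s_n\ge 4\,s_{n-2}$.
   Context: $s_n$ is the number of simple permutations in $\mathcal A_n$. Here $\mathcal A_{n}$ is the set of permutations $w\in S_{n}$ (one-line notation $w_1\cdots w_n$) avoiding all six vincular patterns below, where $w$ contains - $\underline{32}\,\underline{41}$ if there are $i,j$ with $i+2\le j\le n-1$ and $w_{j+1}<w_{i+1}<w_i<w_j$; - $\underline{14}\,\underline{23}$ if there are such $i,j$ with $w_i<w_j<w_{j+1}<w_{i+1}$; - $\underline{41}\,\underline{32}$ if there are such $i,j$ with $w_{i+1}<w_{j+1}<w_j<w_i$; - $\underline{23}\,\underline{14}$ if there are such $i,j$ with $w_j<w_i<w_{i+1}<w_{j+1}$; - $\underline{23}\,\underline{1}$ if there is $i$ with $i+1\le n-1$ and $w_n<w_i<w_{i+1}$; - $\underline{1}\,\underline{32}$ if there is $j$ with $2\le j\le n-1$ and $w_1<w_{j+1}<w_j$. A permutation $\pi\in S_n$ is simple if there is no interval of positions $\{i,\dots,j\}$ with $2\le j-i+1\le n-1$ such that $\{\pi_i,\dots,\pi_j\}$ is a set of consecutive integers. *)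

theory Defs
  imports "HOL-Combinatorics.Permutations"
begin

text \<open>A permutation w in S_n is a function nat to nat that permutes the positions {1..n};
  w i is the i-th letter of the one-line notation w_1 ... w_n.\<close>

definition contains_3241 :: "nat \<Rightarrow> (nat \<Rightarrow> nat) \<Rightarrow> bool" where
  "contains_3241 n w \<longleftrightarrow> (\<exists>i j. 1 \<le> i \<and> i + 2 \<le> j \<and> j \<le> n - 1 \<and>
      w (j+1) < w (i+1) \<and> w (i+1) < w i \<and> w i < w j)"

definition contains_1423 :: "nat \<Rightarrow> (nat \<Rightarrow> nat) \<Rightarrow> bool" where
  "contains_1423 n w \<longleftrightarrow> (\<exists>i j. 1 \<le> i \<and> i + 2 \<le> j \<and> j \<le> n - 1 \<and>
      w i < w j \<and> w j < w (j+1) \<and> w (j+1) < w (i+1))"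

definition contains_4132 :: "nat \<Rightarrow> (nat \<Rightarrow> nat) \<Rightarrow> bool" where
  "contains_4132 n w \<longleftrightarrow> (\<exists>i j. 1 \<le> i \<and> i + 2 \<le> j \<and> j \<le> n - 1 \<and>
      w (i+1) < w (j+1) \<and> w (j+1) < w j \<and> w j < w i)"

definition contains_2314 :: "nat \<Rightarrow> (nat \<Rightarrow> nat) \<Rightarrow> bool" where
  "contains_2314 n w \<longleftrightarrow> (\<exists>i j. 1 \<le> i \<and> i + 2 \<le> j \<and> j \<le> n - 1 \<and>
      w j < w i \<and> w i < w (i+1) \<and> w (i+1) < w (j+1))"

definition contains_231 :: "nat \<Rightarrow> (nat \<Rightarrow> nat) \<Rightarrow> bool" where
  "contains_231 n w \<longleftrightarrow> (\<exists>i. 1 \<le> i \<and> i + 1 \<le> n - 1 \<and> w n < w i \<and> w i < w (i+1))"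

definition contains_132 :: "nat \<Rightarrow> (nat \<Rightarrow> nat) \<Rightarrow> bool" where
  "contains_132 n w \<longleftrightarrow> (\<exists>j. 2 \<le> j \<and> j \<le> n - 1 \<and> w 1 < w (j+1) \<and> w (j+1) < w j)"

definition A_set :: "nat \<Rightarrow> (nat \<Rightarrow> nat) set" where
  "A_set n = {w. w permutes {1..n} \<and> \<not> contains_3241 n w \<and> \<not> contains_1423 n w \<and>
      \<not> contains_4132 n w \<and> \<not> contains_2314 n w \<and> \<not> contains_231 n w \<and> \<not> contains_132 n w}"

definition simple_perm :: "nat \<Rightarrow> (nat \<Rightarrow> nat) \<Rightarrow> bool" where
  "simple_perm n w \<longleftrightarrow> \<not> (\<exists>i j. 1 \<le> i \<and> j \<le> n \<and> 2 \<le> j - i + 1 \<and> j - i + 1 \<le> n - 1 \<and>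
      (\<exists>a b. w ` {i..j} = {a..b}))"

definition s_seq :: "nat \<Rightarrow> nat" where
  "s_seq n = card {w \<in> A_set n. simple_perm n w}"

end

theory Submission
  imports Defs
begin


fun edges :: "nat list \<Rightarrow> (nat \<times> nat) set" where
  "edges (x # y # zs) = insert (x, y) (edges (y # zs))"
| "edges _ = {}"

lemma edges_nth: "(a,b) \<in> edges xs \<longleftrightarrow> (\<exists>k. Suc k < length xs \<and> xs!k = a \<and> xs!Suc k = b)"
proof (induction xs rule: edges.induct)
  case (1 x y zs)
  show ?case
  proof
    assume "(a,b) \<in> edges (x # y # zs)"
    then consider "(a,b) = (x,y)" | "(a,b) \<in> edges (y#zs)" by auto
    then show "\<exists>k. Suc k < length (x # y # zs) \<and> (x # y # zs)!k = a \<and> (x # y # zs)!Suc k = b"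
    proof cases
      case 1 then show ?thesis by (intro exI[of _ 0]) auto
    next
      case 2
      then obtain k where "Suc k < length (y#zs)" "(y#zs)!k = a" "(y#zs)!Suc k = b" using "1.IH" by blast
      then show ?thesis by (intro exI[of _ "Suc k"]) auto
    qed
  next
    assume "\<exists>k. Suc k < length (x # y # zs) \<and> (x # y # zs)!k = a \<and> (x # y # zs)!Suc k = b"
    then obtain k where k: "Suc k < length (x # y # zs)" "(x # y # zs)!k = a" "(x # y # zs)!Suc k = b" by blast
    show "(a,b) \<in> edges (x # y # zs)"
    proof (cases k)
      case 0 then show ?thesis using k by auto
    next
      case (Suc j)
      then have "(a,b) \<in> edges (y#zs)" using "1.IH" k by auto
      then show ?thesis by simp
    qed
  qed
next
  case ("2_1") then show ?case by simp
next
  case ("2_2" v) then show ?case by simp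
qed

lemma edges_append: "edges (xs @ ys) = edges xs \<union> edges ys \<union> (if xs \<noteq> [] \<and> ys \<noteq> [] then {(last xs, hd ys)} else {})"
proof (induction xs rule: edges.induct)
  case (1 x y zs) then show ?case by auto
next
  case "2_1" then show ?case by simp
next
  case ("2_2" v) then show ?case by (cases ys) auto
qed

lemma edges_concat_map:
  assumes "\<forall>x\<in>set xs. f x \<noteq> []"
  shows "edges (concat (map f xs)) = (\<Union>x\<in>set xs. edges (f x)) \<union> {(last (f x), hd (f y)) | x y. (x,y) \<in> edges xs}"
  using assms
proof (induction xs rule: edges.induct)
  case (1 x y zs)
  have ne: "concat (map f (y # zs)) \<noteq> []" "hd (concat (map f (y # zs))) = hd (f y)" using 1 by auto
  have "edges (concat (map f (x # y # zs))) = edges (f x) \<union> edges (concat (map f (y # zs))) \<union> {(last (f x), hd (f y))}"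
    using ne 1(2) by (simp add: edges_append)
  then show ?case using 1 by auto
next
  case "2_1" then show ?case by simp
next
  case ("2_2" v) then show ?case by simp
qed

lemma edges_set: "(a,b) \<in> edges xs \<Longrightarrow> a \<in> set xs \<and> b \<in> set xs"
  by (induction xs rule: edges.induct) auto

lemma edges_distinct_neq: "distinct xs \<Longrightarrow> (a,b) \<in> edges xs \<Longrightarrow> a \<noteq> b"
  by (induction xs rule: edges.induct) (auto dest: edges_set)

definition nest :: "nat \<Rightarrow> nat \<Rightarrow> nat \<Rightarrow> nat \<Rightarrow> bool" where
  "nest a b c d \<longleftrightarrow> (a < c \<and> c < d \<and> d < b) \<or> (b < d \<and> d < c \<and> c < a)"

definition L4 :: "nat list \<Rightarrow> bool" where
  "L4 xs \<longleftrightarrow> (\<exists>a b c d. (a,b) \<in> edges xs \<and> (c,d) \<in> edges xs \<and> nest a b c d)"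
definition L231 :: "nat list \<Rightarrow> bool" where
  "L231 xs \<longleftrightarrow> (\<exists>a b. (a,b) \<in> edges xs \<and> last xs < a \<and> a < b)"
definition L132 :: "nat list \<Rightarrow> bool" where
  "L132 xs \<longleftrightarrow> (\<exists>a b. (a,b) \<in> edges xs \<and> hd xs < b \<and> b < a)"
definition Lblock :: "nat list \<Rightarrow> bool" where
  "Lblock xs \<longleftrightarrow> (\<exists>as bs cs. xs = as @ bs @ cs \<and> 2 \<le> length bs \<and> length bs < length xs \<and> (\<exists>a b. set bs = {a..b}))"

definition wlist :: "nat \<Rightarrow> (nat \<Rightarrow> nat) \<Rightarrow> nat list" where
  "wlist n w = map w [1..<Suc n]"

lemma wlist_nth: "k < n \<Longrightarrow> wlist n w ! k = w (Suc k)"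
  by (simp add: wlist_def nth_map_upt del: upt_Suc)

lemma wlist_len[simp]: "length (wlist n w) = n" by (simp add: wlist_def)

lemma edges_wlist: "(a,b) \<in> edges (wlist n w) \<longleftrightarrow> (\<exists>i. 1 \<le> i \<and> i + 1 \<le> n \<and> w i = a \<and> w (i+1) = b)"
proof -
  have "(a,b) \<in> edges (wlist n w) \<longleftrightarrow> (\<exists>k. Suc k < n \<and> w (Suc k) = a \<and> w (Suc (Suc k)) = b)"
    by (auto simp: edges_nth wlist_nth)
  also have "\<dots> \<longleftrightarrow> (\<exists>i. 1 \<le> i \<and> i + 1 \<le> n \<and> w i = a \<and> w (i+1) = b)"
    apply (rule iffI)
     apply (metis Suc_eq_plus1 Suc_le_eq le_add2)
    by (metis Suc_eq_plus1 Suc_le_eq Suc_pred less_le_trans zero_less_one)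
  finally show ?thesis .
qed

lemma L4_iff: "L4 (wlist n w) \<longleftrightarrow> contains_3241 n w \<or> contains_1423 n w \<or> contains_4132 n w \<or> contains_2314 n w"
proof
  assume "L4 (wlist n w)"
  then obtain a b c d where e: "(a,b) \<in> edges (wlist n w)" "(c,d) \<in> edges (wlist n w)" and ne: "nest a b c d"
    unfolding L4_def by blast
  obtain i where i: "1 \<le> i" "i + 1 \<le> n" "w i = a" "w (i+1) = b" using e(1) edges_wlist by blast
  obtain j where j: "1 \<le> j" "j + 1 \<le> n" "w j = c" "w (j+1) = d" using e(2) edges_wlist by blast
  have "i + 2 \<le> j \<or> j + 2 \<le> i"
  proof (rule ccontr)
    assume "\<not> ?thesis"
    then have "j = i \<or> j = i + 1 \<or> i = j + 1" by linarith
    then show False using i j ne unfolding nest_def by auto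
  qed
  then show "contains_3241 n w \<or> contains_1423 n w \<or> contains_4132 n w \<or> contains_2314 n w"
  proof
    assume ij: "i + 2 \<le> j"
    have jn: "j \<le> n - 1" using j by linarith
    from ne show ?thesis unfolding nest_def
    proof
      assume "a < c \<and> c < d \<and> d < b"
      then have "contains_1423 n w" unfolding contains_1423_def using i j ij jn by blast
      then show ?thesis by blast
    next
      assume "b < d \<and> d < c \<and> c < a"
      then have "contains_4132 n w" unfolding contains_4132_def using i j ij jn by blast
      then show ?thesis by blast
    qed
  next
    assume ij: "j + 2 \<le> i"
    have jn: "i \<le> n - 1" using i by linarith
    from ne show ?thesis unfolding nest_def
    proof
      assume "a < c \<and> c < d \<and> d < b"
      then have "contains_2314 n w" unfolding contains_2314_def using i j ij jn by blast
      then show ?thesis by blast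
    next
      assume "b < d \<and> d < c \<and> c < a"
      then have "contains_3241 n w" unfolding contains_3241_def using i j ij jn by blast
      then show ?thesis by blast
    qed
  qed
next
  assume "contains_3241 n w \<or> contains_1423 n w \<or> contains_4132 n w \<or> contains_2314 n w"
  then obtain i j where ij: "1 \<le> i" "i + 2 \<le> j" "j \<le> n - 1"
    and c: "(w (j+1) < w (i+1) \<and> w (i+1) < w i \<and> w i < w j) \<or> (w i < w j \<and> w j < w (j+1) \<and> w (j+1) < w (i+1))
       \<or> (w (i+1) < w (j+1) \<and> w (j+1) < w j \<and> w j < w i) \<or> (w j < w i \<and> w i < w (i+1) \<and> w (i+1) < w (j+1))"
    unfolding contains_3241_def contains_1423_def contains_4132_def contains_2314_def by blast
  have e1: "(w i, w (i+1)) \<in> edges (wlist n w)" using ij by (subst edges_wlist) (intro exI[of _ i], auto)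
  have e2: "(w j, w (j+1)) \<in> edges (wlist n w)" using ij by (subst edges_wlist) (intro exI[of _ j], auto)
  show "L4 (wlist n w)" unfolding L4_def
    using c e1 e2 unfolding nest_def by blast
qed

lemma last_wlist: "n \<ge> 1 \<Longrightarrow> last (wlist n w) = w n"
  by (simp add: wlist_def)
lemma hd_wlist: "n \<ge> 1 \<Longrightarrow> hd (wlist n w) = w 1"
  by (simp add: wlist_def upt_conv_Cons del: upt_Suc)

lemma L231_iff: assumes "n \<ge> 1" shows "L231 (wlist n w) \<longleftrightarrow> contains_231 n w"
proof
  assume "L231 (wlist n w)"
  then obtain i where i: "1 \<le> i" "i + 1 \<le> n" "w n < w i" "w i < w (i+1)"
    unfolding L231_def using last_wlist[OF assms] edges_wlist by metis
  then have "i + 1 \<noteq> n" by auto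
  then show "contains_231 n w" unfolding contains_231_def using i by (intro exI[of _ i]) auto
next
  assume "contains_231 n w"
  then obtain i where "1 \<le> i" "i + 1 \<le> n - 1" "w n < w i" "w i < w (i+1)" unfolding contains_231_def by blast
  then show "L231 (wlist n w)" unfolding L231_def last_wlist[OF assms] edges_wlist
    by (intro exI[of _ "w i"] exI[of _ "w (i+1)"]) (auto intro!: exI[of _ i])
qed

lemma L132_iff: assumes "n \<ge> 1" shows "L132 (wlist n w) \<longleftrightarrow> contains_132 n w"
proof
  assume "L132 (wlist n w)"
  then obtain i where i: "1 \<le> i" "i + 1 \<le> n" "w 1 < w (i+1)" "w (i+1) < w i"
    unfolding L132_def using hd_wlist[OF assms] edges_wlist by metis
  then have "i \<noteq> 1" by auto
  then show "contains_132 n w" unfolding contains_132_def using i by (intro exI[of _ i]) auto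
next
  assume "contains_132 n w"
  then obtain j where "2 \<le> j" "j \<le> n - 1" "w 1 < w (j+1)" "w (j+1) < w j" unfolding contains_132_def by blast
  then show "L132 (wlist n w)" unfolding L132_def hd_wlist[OF assms] edges_wlist
    by (intro exI[of _ "w j"] exI[of _ "w (j+1)"]) (auto intro!: exI[of _ j])
qed


lemma wlist_sub: "k + l \<le> n \<Longrightarrow> take l (drop k (wlist n w)) = map w [Suc k..<Suc k + l]"
  by (simp add: wlist_def drop_map take_map del: upt_Suc)

lemma set_wlist_sub: "k + l \<le> n \<Longrightarrow> set (take l (drop k (wlist n w))) = w ` {Suc k..k + l}"
  by (simp add: wlist_sub atLeastLessThanSuc_atLeastAtMost del: upt_Suc)

lemma take_drop_split: "xs = take k xs @ take l (drop k xs) @ drop (k + l) xs"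
  by (metis append.assoc append_take_drop_id drop_drop add.commute)

lemma simple_iff: "simple_perm n w \<longleftrightarrow> \<not> Lblock (wlist n w)"
proof
  assume s: "simple_perm n w"
  show "\<not> Lblock (wlist n w)"
  proof
    assume "Lblock (wlist n w)"
    then obtain as bs cs a b where d: "wlist n w = as @ bs @ cs" "2 \<le> length bs" "length bs < n" "set bs = {a..b}"
      unfolding Lblock_def by (metis wlist_len)
    define k where "k = length as"
    define l where "l = length bs"
    have kl: "k + l \<le> n" using d(1) unfolding k_def l_def by (metis le_add1 length_append wlist_len add.assoc)
    have "bs = take l (drop k (wlist n w))" using d(1) unfolding k_def l_def by simp
    then have "w ` {Suc k..k + l} = {a..b}" using set_wlist_sub[OF kl] d(4) by simp
    then have "\<not> simple_perm n w" unfolding simple_perm_def using kl d(2,3) unfolding l_def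
      by (intro notI, elim notE) (rule exI[of _ "Suc k"], rule exI[of _ "k + l"], auto simp: l_def)
    then show False using s by blast
  qed
next
  assume nb: "\<not> Lblock (wlist n w)"
  show "simple_perm n w" unfolding simple_perm_def
  proof
    assume "\<exists>i j. 1 \<le> i \<and> j \<le> n \<and> 2 \<le> j - i + 1 \<and> j - i + 1 \<le> n - 1 \<and> (\<exists>a b. w ` {i..j} = {a..b})"
    then obtain i j a b where ij: "1 \<le> i" "j \<le> n" "2 \<le> j - i + 1" "j - i + 1 \<le> n - 1" "w ` {i..j} = {a..b}"
      by blast
    define k where "k = i - 1"
    define l where "l = j - i + 1"
    have kl: "k + l \<le> n" "k + l = j" "Suc k = i" using ij unfolding k_def l_def by auto
    have "set (take l (drop k (wlist n w))) = {a..b}" using set_wlist_sub[OF kl(1)] kl ij(5) by simp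
    moreover have "length (take l (drop k (wlist n w))) = l" using kl by simp
    ultimately have "Lblock (wlist n w)" unfolding Lblock_def using ij(3,4) take_drop_split[of "wlist n w" k l]
      unfolding l_def by (intro exI[of _ "take k (wlist n w)"] exI[of _ "take l (drop k (wlist n w))"] exI[of _ "drop (k+l) (wlist n w)"]) (auto simp: l_def)
    then show False using nb by blast
  qed
qed

definition fun_of :: "nat list \<Rightarrow> nat \<Rightarrow> nat" where
  "fun_of xs k = (if 1 \<le> k \<and> k \<le> length xs then xs ! (k - 1) else k)"

lemma wlist_fun_of: "wlist (length xs) (fun_of xs) = xs"
  by (rule nth_equalityI) (auto simp: wlist_nth fun_of_def)

lemma fun_of_permutes:
  assumes "distinct xs" "set xs = {1..length xs}"
  shows "fun_of xs permutes {1..length xs}"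
proof (rule bij_imp_permutes)
  show "bij_betw (fun_of xs) {1..length xs} {1..length xs}"
  proof (rule bij_betw_imageI)
    show "inj_on (fun_of xs) {1..length xs}"
    proof (rule inj_onI)
      fix x y assume "x \<in> {1..length xs}" "y \<in> {1..length xs}" "fun_of xs x = fun_of xs y"
      then have "xs ! (x - 1) = xs ! (y - 1)" "x - 1 < length xs" "y - 1 < length xs" by (auto simp: fun_of_def)
      then have "x - 1 = y - 1" using nth_eq_iff_index_eq assms(1) by blast
      then show "x = y" using \<open>x \<in> _\<close> \<open>y \<in> _\<close> by auto
    qed
    have "fun_of xs ` {1..length xs} = set xs"
    proof
      show "fun_of xs ` {1..length xs} \<subseteq> set xs" by (auto simp: fun_of_def)
      show "set xs \<subseteq> fun_of xs ` {1..length xs}"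
      proof
        fix v assume "v \<in> set xs"
        then obtain k where "k < length xs" "xs ! k = v" by (auto simp: in_set_conv_nth)
        then show "v \<in> fun_of xs ` {1..length xs}" by (intro image_eqI[of _ _ "Suc k"]) (auto simp: fun_of_def)
      qed
    qed
    then show "fun_of xs ` {1..length xs} = {1..length xs}" using assms(2) by simp
  qed
  show "\<And>x. x \<notin> {1..length xs} \<Longrightarrow> fun_of xs x = x" by (auto simp: fun_of_def)
qed

lemma wlist_distinct: "w permutes {1..n} \<Longrightarrow> distinct (wlist n w)"
  unfolding wlist_def by (auto simp: distinct_map permutes_inj_on del: upt_Suc)

lemma wlist_set: "w permutes {1..n} \<Longrightarrow> set (wlist n w) = {1..n}"
proof -
  assume p: "w permutes {1..n}"
  have "set (wlist n w) = w ` {1..n}" unfolding wlist_def by (auto simp del: upt_Suc simp add: atLeastLessThanSuc_atLeastAtMost)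
  then show ?thesis using permutes_image[OF p] by simp
qed

lemma wlist_inj:
  assumes "w1 permutes {1..n}" "w2 permutes {1..n}" "wlist n w1 = wlist n w2" shows "w1 = w2"
proof
  fix x show "w1 x = w2 x"
  proof (cases "x \<in> {1..n}")
    case True
    then have "x - 1 < n" "Suc (x - 1) = x" by auto
    then show ?thesis using assms(3) wlist_nth by metis
  next
    case False then show ?thesis using assms(1,2) permutes_not_in by metis
  qed
qed




lemma distinct_concat_map:
  assumes "distinct xs" "\<forall>x\<in>set xs. distinct (f x)"
    "\<forall>x\<in>set xs. \<forall>y\<in>set xs. x \<noteq> y \<longrightarrow> set (f x) \<inter> set (f y) = {}"
  shows "distinct (concat (map f xs))"
  using assms by (induction xs) auto

lemma hd_concat_map: "xs \<noteq> [] \<Longrightarrow> f (hd xs) \<noteq> [] \<Longrightarrow> hd (concat (map f xs)) = hd (f (hd xs))"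
  by (cases xs) auto

lemma last_concat_map: "xs \<noteq> [] \<Longrightarrow> f (last xs) \<noteq> [] \<Longrightarrow> last (concat (map f xs)) = last (f (last xs))"
  by (induction xs rule: rev_induct) auto

lemma filter_sublist:
  assumes "filter P (as @ bs @ cs) = map g w"
  shows "\<exists>as' bs' cs'. w = as' @ bs' @ cs' \<and> map g bs' = filter P bs"
proof -
  have "map g w = filter P as @ (filter P bs @ filter P cs)" using assms by simp
  then obtain us vs where 1: "w = us @ vs" "filter P as = map g us" "filter P bs @ filter P cs = map g vs"
    by (auto simp: map_eq_append_conv)
  then obtain us2 vs2 where 2: "vs = us2 @ vs2" "filter P bs = map g us2"
    by (metis map_eq_append_conv)
  show ?thesis using 1 2 by auto
qed

lemma mono_interval:
  fixes g :: "nat \<Rightarrow> nat"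
  assumes mono: "\<And>x y. x \<in> {1..m} \<Longrightarrow> y \<in> {1..m} \<Longrightarrow> x < y \<Longrightarrow> g x < g y"
  shows "\<exists>lo hi. {x\<in>{1..m}. a \<le> g x \<and> g x \<le> b} = {lo..hi}"
proof (cases "{x\<in>{1..m}. a \<le> g x \<and> g x \<le> b} = {}")
  case True then show ?thesis by (intro exI[of _ 1] exI[of _ 0]) auto
next
  case False
  define S where "S = {x\<in>{1..m}. a \<le> g x \<and> g x \<le> b}"
  have fin: "finite S" unfolding S_def by auto
  have ne: "S \<noteq> {}" using False unfolding S_def .
  have "S = {Min S..Max S}"
  proof
    show "S \<subseteq> {Min S..Max S}" using fin by auto
    show "{Min S..Max S} \<subseteq> S"
    proof
      fix x assume x: "x \<in> {Min S..Max S}"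
      have mn: "Min S \<in> S" "Max S \<in> S" using fin ne by auto
      then have mn1: "Min S \<in> {1..m}" "a \<le> g (Min S)" "Max S \<in> {1..m}" "g (Max S) \<le> b"
        unfolding S_def by auto
      have x1: "x \<in> {1..m}" using x mn1 by auto
      have "g (Min S) \<le> g x"
      proof (cases "Min S = x")
        case False then show ?thesis using mono[OF mn1(1) x1] x by auto
      qed simp
      moreover have "g x \<le> g (Max S)"
      proof (cases "Max S = x")
        case False then show ?thesis using mono[OF x1 mn1(3)] x by auto
      qed simp
      moreover have "x \<in> {1..m}" using x1 .
      moreover note mn1
      ultimately show "x \<in> S" unfolding S_def by auto
    qed
  qed
  then show ?thesis unfolding S_def by blast
qed

lemma edges_sub: "edges bs \<subseteq> edges (as @ bs @ cs)"
  by (auto simp: edges_append)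

lemma positional:
  assumes d: "distinct (as @ bs @ cs)" and e1: "(p,v) \<in> edges (as @ bs @ cs)" and e2: "(v,s) \<in> edges (as @ bs @ cs)"
    and ps: "p \<in> set bs" "s \<in> set bs"
  shows "v \<in> set bs"
proof -
  define u where "u = as @ bs @ cs"
  obtain k1 where k1: "Suc k1 < length u" "u!k1 = p" "u!Suc k1 = v" using e1 unfolding u_def edges_nth by blast
  obtain k2 where k2: "Suc k2 < length u" "u!k2 = v" "u!Suc k2 = s" using e2 unfolding u_def edges_nth by blast
  have du: "distinct u" using d unfolding u_def .
  have "k2 = Suc k1" using k1 k2 nth_eq_iff_index_eq[OF du] by (metis Suc_lessD)
  obtain i where i: "i < length bs" "bs!i = p" using ps(1) by (auto simp: in_set_conv_nth)
  obtain j where j: "j < length bs" "bs!j = s" using ps(2) by (auto simp: in_set_conv_nth)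
  have ui: "u!(length as + i) = p" "length as + i < length u" using i unfolding u_def by (auto simp: nth_append)
  have uj: "u!(length as + j) = s" "length as + j < length u" using j unfolding u_def by (auto simp: nth_append)
  have "k1 = length as + i" using ui k1 nth_eq_iff_index_eq[OF du] by (metis Suc_lessD)
  moreover have "Suc k2 = length as + j" using uj k2 nth_eq_iff_index_eq[OF du] by metis
  ultimately have "k2 = length as + Suc i" "Suc i < length bs" using \<open>k2 = Suc k1\<close> j by auto
  then have "v = bs ! Suc i" using k2 unfolding u_def by (auto simp: nth_append)
  then show ?thesis using \<open>Suc i < length bs\<close> by auto
qed

definition FF :: "nat list \<Rightarrow> nat list \<Rightarrow> nat \<Rightarrow> nat list" where
  "FF L1 L2 x = (if x = 1 then L1 else if x = 2 then L2 else [x+2])"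

lemma edges_single[simp]: "edges [v] = {}" by simp




locale mapdata =
  fixes L1 L2 :: "nat list" and t1 t2 :: nat
  assumes ne: "L1 \<noteq> []" "L2 \<noteq> []"
    and dist: "distinct (L1 @ L2)"
    and setL: "set L1 \<union> set L2 = {1,2,3,4}"
    and lmono: "last L1 < last L2" "last L2 < 5"
    and hmono: "hd L1 < hd L2" "hd L2 < 5"
    and edgecond: "\<And>x y. 1 \<le> x \<Longrightarrow> 1 \<le> y \<Longrightarrow> x \<noteq> y \<Longrightarrow> y \<noteq> x+1 \<Longrightarrow> x \<noteq> y+1 \<Longrightarrow>
        (last (FF L1 L2 x) < hd (FF L1 L2 y) \<longleftrightarrow> x < y)"
    and int_ext: "\<And>a b x y. (a,b) \<in> edges L1 \<union> edges L2 \<Longrightarrow> 1 \<le> x \<Longrightarrow> 1 \<le> y \<Longrightarrow> x \<noteq> y \<Longrightarrow> y \<noteq> x+1 \<Longrightarrow> x \<noteq> y+1 \<Longrightarrow>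
        \<not> nest a b (last (FF L1 L2 x)) (hd (FF L1 L2 y)) \<and> \<not> nest (last (FF L1 L2 x)) (hd (FF L1 L2 y)) a b"
    and int_int: "\<And>a b c d. (a,b) \<in> edges L1 \<union> edges L2 \<Longrightarrow> (c,d) \<in> edges L1 \<union> edges L2 \<Longrightarrow> \<not> nest a b c d"
    and int231: "\<And>a b l. (a,b) \<in> edges L1 \<union> edges L2 \<Longrightarrow> 1 \<le> l \<Longrightarrow> \<not> (last (FF L1 L2 l) < a \<and> a < b)"
    and int132: "\<And>a b h. (a,b) \<in> edges L1 \<union> edges L2 \<Longrightarrow> 1 \<le> h \<Longrightarrow> \<not> (hd (FF L1 L2 h) < b \<and> b < a)"
    and sb_int: "\<And>a b. (a,b) \<in> edges L1 \<union> edges L2 \<Longrightarrow> b = a + 1 \<or> a = b + 1 \<Longrightarrow>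
        (a = t1 \<or> a = t2 \<or> 5 \<le> a) \<and> (b = t1 \<or> b = t2 \<or> 5 \<le> b)"
    and sb_ext: "\<And>x y. 1 \<le> x \<Longrightarrow> 1 \<le> y \<Longrightarrow> x \<noteq> y \<Longrightarrow> y \<noteq> x+1 \<Longrightarrow> x \<noteq> y+1 \<Longrightarrow>
        hd (FF L1 L2 y) = last (FF L1 L2 x) + 1 \<or> last (FF L1 L2 x) = hd (FF L1 L2 y) + 1 \<Longrightarrow>
        (last (FF L1 L2 x) = t1 \<or> last (FF L1 L2 x) = t2 \<or> 5 \<le> last (FF L1 L2 x)) \<and>
        (hd (FF L1 L2 y) = t1 \<or> hd (FF L1 L2 y) = t2 \<or> 5 \<le> hd (FF L1 L2 y))"
    and filt: "filter (\<lambda>v. v = t1 \<or> v = t2 \<or> 5 \<le> v) L1 = [t1]" "filter (\<lambda>v. v = t1 \<or> v = t2 \<or> 5 \<le> v) L2 = [t2]"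
    and t12: "t1 < t2"
    and tcase: "t1 = 1 \<or> (t1 = 2 \<and> (\<exists>p s. (p,1) \<in> edges L1 \<union> edges L2 \<and> (1,s) \<in> edges L1 \<union> edges L2))"
begin

abbreviation "F \<equiv> FF L1 L2"
definition lf where "lf x = last (F x)"
definition hf where "hf x = hd (F x)"
definition old :: "nat \<Rightarrow> bool" where "old v \<longleftrightarrow> v = t1 \<or> v = t2 \<or> 5 \<le> v"
definition tau :: "nat \<Rightarrow> nat" where "tau x = (if x = 1 then t1 else if x = 2 then t2 else x + 2)"

lemma F_ne: "F x \<noteq> []" using ne by (simp add: FF_def)

lemma setL14: "set L1 \<union> set L2 = {1..4}"
proof -
  have "{1,2,3,4} = {1..(4::nat)}" by auto
  then show ?thesis using setL by simp
qed
lemma setL1: "set L1 \<subseteq> {1..4}" and setL2: "set L2 \<subseteq> {1..4}" using setL14 by auto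

lemma t1_in: "t1 \<in> set L1" using filt(1) by (metis filter_is_subset list.set_intros(1) subsetD)
lemma t2_in: "t2 \<in> set L2" using filt(2) by (metis filter_is_subset list.set_intros(1) subsetD)
lemma t2_le: "t2 \<le> 4" using t2_in setL2 by auto
lemma t1_ge: "1 \<le> t1" using t1_in setL1 by auto

lemma lf_less: "1 \<le> x \<Longrightarrow> 1 \<le> x' \<Longrightarrow> lf x < lf x' \<longleftrightarrow> x < x'"
  unfolding lf_def FF_def using lmono by auto
lemma hf_less: "1 \<le> x \<Longrightarrow> 1 \<le> x' \<Longrightarrow> hf x < hf x' \<longleftrightarrow> x < x'"
  unfolding hf_def FF_def using hmono by auto

lemma tau_mono: "x \<in> {1..m} \<Longrightarrow> y \<in> {1..m} \<Longrightarrow> x < y \<Longrightarrow> tau x < tau y"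
  unfolding tau_def using t12 t2_le by auto

lemma old_tau: "1 \<le> x \<Longrightarrow> old (tau x)"
  unfolding old_def tau_def by auto

lemma filter_F: "1 \<le> x \<Longrightarrow> filter old (F x) = [tau x]"
  using filt unfolding old_def tau_def FF_def by auto

lemma set_ul:
  assumes s: "set wl = {1..m}" and m3: "3 \<le> m"
  shows "set (concat (map F wl)) = {1..m+2}"
proof
  show "set (concat (map F wl)) \<subseteq> {1..m+2}"
  proof
    fix v assume "v \<in> set (concat (map F wl))"
    then obtain x where x: "x \<in> {1..m}" "v \<in> set (F x)" using s by auto
    show "v \<in> {1..m+2}"
    proof (cases "x = 1 \<or> x = 2")
      case True
      then have "v \<in> set L1 \<union> set L2" using x by (auto simp: FF_def)
      then show ?thesis using setL14 m3 by auto
    next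
      case False
      then show ?thesis using x by (auto simp: FF_def)
    qed
  qed
  show "{1..m+2} \<subseteq> set (concat (map F wl))"
  proof
    fix v assume v: "v \<in> {1..m+2}"
    show "v \<in> set (concat (map F wl))"
    proof (cases "v \<le> 4")
      case True
      then have "v \<in> set L1 \<union> set L2" using setL14 v by auto
      moreover have "1 \<in> set wl" "2 \<in> set wl" using s m3 by auto
      moreover have "F 1 = L1" "F 2 = L2" by (simp_all add: FF_def)
      ultimately have "\<exists>x\<in>set wl. v \<in> set (F x)" by (metis Un_iff)
      then show ?thesis by auto
    next
      case False
      then have "v - 2 \<in> set wl" "F (v-2) = [v]" using v s by (auto simp: FF_def)
      then show ?thesis by force
    qed
  qed
qed

lemma distinct_ul:
  assumes d: "distinct wl" and s: "set wl = {1..m}"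
  shows "distinct (concat (map F wl))"
proof (rule distinct_concat_map)
  show "distinct wl" by fact
  show "\<forall>x\<in>set wl. distinct (F x)" using dist by (auto simp: FF_def)
  have d12: "set L1 \<inter> set L2 = {}" using dist by auto
  show "\<forall>x\<in>set wl. \<forall>y\<in>set wl. x \<noteq> y \<longrightarrow> set (F x) \<inter> set (F y) = {}"
  proof (intro ballI impI)
    fix x y assume xy: "x \<in> set wl" "y \<in> set wl" "x \<noteq> y"
    have a: "v \<in> set (F z) \<Longrightarrow> z \<noteq> 1 \<Longrightarrow> z \<noteq> 2 \<Longrightarrow> v = z + 2" for v z by (auto simp: FF_def)
    have b: "v \<in> set (F z) \<Longrightarrow> (z = 1 \<or> z = 2) \<Longrightarrow> v \<le> 4" for v z using setL1 setL2 by (auto simp: FF_def)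
    show "set (F x) \<inter> set (F y) = {}"
    proof (rule ccontr)
      assume "set (F x) \<inter> set (F y) \<noteq> {}"
      then obtain v where v: "v \<in> set (F x)" "v \<in> set (F y)" by auto
      show False
      proof (cases "x = 1 \<or> x = 2")
        case True note tx = this
        show False
        proof (cases "y = 1 \<or> y = 2")
          case True
          then show False using tx xy v d12 by (auto simp: FF_def)
        next
          case False then show False using a[OF v(2)] b[OF v(1) tx] xy s by auto
        qed
      next
        case False note fx = this
        show False
        proof (cases "y = 1 \<or> y = 2")
          case True
          then show False using a[OF v(1)] b[OF v(2) True] fx xy s by auto
        next
          case False then show False using a[OF v(2)] a[OF v(1)] fx xy by auto
        qed
      qed
    qed
  qed
qed

lemma wl_edge:
  assumes d: "distinct wl" and s: "set wl = {1..m}" and m3: "3 \<le> m" and nb: "\<not> Lblock wl"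
    and e: "(x,y) \<in> edges wl"
  shows "1 \<le> x" "1 \<le> y" "x \<le> m" "y \<le> m" "x \<noteq> y" "y \<noteq> x+1" "x \<noteq> y+1"
proof -
  show "1 \<le> x" "1 \<le> y" "x \<le> m" "y \<le> m" using edges_set[OF e] s by auto
  show "x \<noteq> y" using edges_distinct_neq[OF d e] .
  have len: "length wl = m" using distinct_card[OF d] s by simp
  obtain k where k: "Suc k < length wl" "wl!k = x" "wl!Suc k = y" using e edges_nth by blast
  have dk: "drop k wl = x # y # drop (Suc (Suc k)) wl"
    using k by (metis Cons_nth_drop_Suc Suc_lessD)
  have sp: "wl = take k wl @ [x,y] @ drop (k+2) wl"
    using take_drop_split[of wl k 2] dk by simp
  have "\<not> (y = x + 1 \<or> x = y + 1)"
  proof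
    assume c: "y = x + 1 \<or> x = y + 1"
    have "\<exists>a b. set [x,y] = {a..b}"
    proof (cases "y = x + 1")
      case True then show ?thesis by (intro exI[of _ x] exI[of _ y]) auto
    next
      case False then have "x = y + 1" using c by simp
      then show ?thesis by (intro exI[of _ y] exI[of _ x]) auto
    qed
    then have "Lblock wl" unfolding Lblock_def using len m3 sp
      by (intro exI[of _ "take k wl"] exI[of _ "[x,y]"] exI[of _ "drop (k+2) wl"]) auto
    then show False using nb by blast
  qed
  then show "y \<noteq> x+1" "x \<noteq> y+1" by auto
qed

lemma ext_nest:
  assumes "1\<le>x" "1\<le>y" "x\<noteq>y" "y\<noteq>x+1" "x\<noteq>y+1" "1\<le>x'" "1\<le>y'" "x'\<noteq>y'" "y'\<noteq>x'+1" "x'\<noteq>y'+1"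
   and n: "nest (lf x) (hf y) (lf x') (hf y')"
  shows "nest x y x' y'"
proof -
  have c1: "lf x' < hf y' \<longleftrightarrow> x' < y'" using edgecond[of x' y'] assms unfolding lf_def hf_def by auto
  have c2: "lf x < lf x' \<longleftrightarrow> x < x'" "lf x' < lf x \<longleftrightarrow> x' < x" using lf_less assms by auto
  have c3: "hf y < hf y' \<longleftrightarrow> y < y'" "hf y' < hf y \<longleftrightarrow> y' < y" using hf_less assms by auto
  show ?thesis using n c1 c2 c3 \<open>x'\<noteq>y'\<close> unfolding nest_def by auto
qed

lemma filter_old_ul:
  assumes s: "set wl = {1..m}"
  shows "filter old (concat (map F wl)) = map tau wl"
proof -
  have "\<forall>x\<in>set wl. 1 \<le> x" using s by auto
  then show ?thesis
  proof (induction wl)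
    case (Cons x xs) then show ?case using filter_F[of x] by simp
  qed simp
qed

lemma edges_ul:
  assumes s: "set wl = {1..m}" and m3: "3 \<le> m"
  shows "edges (concat (map F wl)) = edges L1 \<union> edges L2 \<union> {(lf x, hf y) | x y. (x,y) \<in> edges wl}"
proof -
  have "(\<Union>x\<in>set wl. edges (F x)) = edges L1 \<union> edges L2"
  proof
    show "(\<Union>x\<in>set wl. edges (F x)) \<subseteq> edges L1 \<union> edges L2" by (auto simp: FF_def split: if_splits)
    have "1 \<in> set wl" "2 \<in> set wl" using s m3 by auto
    moreover have "F 1 = L1" "F 2 = L2" by (simp_all add: FF_def)
    ultimately show "edges L1 \<union> edges L2 \<subseteq> (\<Union>x\<in>set wl. edges (F x))" by (metis UN_upper Un_least)
  qed
  then show ?thesis using edges_concat_map[of wl F] F_ne unfolding lf_def hf_def by auto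
qed

theorem main_map:
  assumes d: "distinct wl" and s: "set wl = {1..m}" and m3: "3 \<le> m"
    and n4: "\<not> L4 wl" and n231: "\<not> L231 wl" and n132: "\<not> L132 wl" and nb: "\<not> Lblock wl"
  shows "distinct (concat (map F wl)) \<and> set (concat (map F wl)) = {1..m+2} \<and> \<not> L4 (concat (map F wl))
    \<and> \<not> L231 (concat (map F wl)) \<and> \<not> L132 (concat (map F wl)) \<and> \<not> Lblock (concat (map F wl))"
proof -
  define ul where "ul = concat (map F wl)"
  have du: "distinct ul" unfolding ul_def using distinct_ul[OF d s] .
  have su: "set ul = {1..m+2}" unfolding ul_def using set_ul[OF s m3] .
  have lu: "length ul = m + 2" using distinct_card[OF du] su by simp
  have lw: "length wl = m" using distinct_card[OF d] s by simp
  have wne: "wl \<noteq> []" using s m3 by auto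
  have E: "edges ul = edges L1 \<union> edges L2 \<union> {(lf x, hf y) | x y. (x,y) \<in> edges wl}"
    unfolding ul_def using edges_ul[OF s m3] .
  note we = wl_edge[OF d s m3 nb]
  have ecases: "P" if "(a,b) \<in> edges ul" "(a,b) \<in> edges L1 \<union> edges L2 \<Longrightarrow> P"
    "\<And>x y. (x,y) \<in> edges wl \<Longrightarrow> a = lf x \<Longrightarrow> b = hf y \<Longrightarrow> P" for a b P
    using that E by blast
  have "\<not> L4 ul"
  proof
    assume "L4 ul"
    then obtain a b c d where ab: "(a,b) \<in> edges ul" and cd: "(c,d) \<in> edges ul" and n: "nest a b c d"
      unfolding L4_def by blast
    show False
    proof (rule ecases[OF ab])
      assume i1: "(a,b) \<in> edges L1 \<union> edges L2"
      show False
      proof (rule ecases[OF cd])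
        assume "(c,d) \<in> edges L1 \<union> edges L2" then show False using int_int[OF i1] n by blast
      next
        fix x y assume xy: "(x,y) \<in> edges wl" "c = lf x" "d = hf y"
        show False using int_ext[OF i1 we(1,2,5,6,7)[OF xy(1)]] n xy unfolding lf_def hf_def by blast
      qed
    next
      fix x y assume xy: "(x,y) \<in> edges wl" "a = lf x" "b = hf y"
      show False
      proof (rule ecases[OF cd])
        assume i2: "(c,d) \<in> edges L1 \<union> edges L2"
        show False using int_ext[OF i2 we(1,2,5,6,7)[OF xy(1)]] n xy unfolding lf_def hf_def by blast
      next
        fix x' y' assume xy': "(x',y') \<in> edges wl" "c = lf x'" "d = hf y'"
        have "nest x y x' y'" using ext_nest[OF we(1,2,5,6,7)[OF xy(1)] we(1,2,5,6,7)[OF xy'(1)]] n xy xy' by simp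
        then show False using n4 xy(1) xy'(1) unfolding L4_def by blast
      qed
    qed
  qed
  moreover have "\<not> L231 ul"
  proof
    assume "L231 ul"
    then obtain a b where ab: "(a,b) \<in> edges ul" "last ul < a" "a < b" unfolding L231_def by blast
    have lst: "last ul = lf (last wl)" unfolding ul_def lf_def using last_concat_map[OF wne F_ne] by simp
    have lw1: "1 \<le> last wl" using s wne last_in_set[OF wne] by auto
    show False
    proof (rule ecases[OF ab(1)])
      assume "(a,b) \<in> edges L1 \<union> edges L2"
      then show False using int231[of a b "last wl"] lw1 ab lst unfolding lf_def by auto
    next
      fix x y assume xy: "(x,y) \<in> edges wl" "a = lf x" "b = hf y"
      have "last wl < x" using lf_less[OF lw1 we(1)[OF xy(1)]] ab lst xy by simp
      moreover have "x < y" using edgecond[OF we(1,2,5,6,7)[OF xy(1)]] ab xy unfolding lf_def hf_def by simp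
      ultimately show False using n231 xy(1) unfolding L231_def by blast
    qed
  qed
  moreover have "\<not> L132 ul"
  proof
    assume "L132 ul"
    then obtain a b where ab: "(a,b) \<in> edges ul" "hd ul < b" "b < a" unfolding L132_def by blast
    have hdu: "hd ul = hf (hd wl)" unfolding ul_def hf_def using hd_concat_map[OF wne F_ne] by simp
    have hw1: "1 \<le> hd wl" using s wne hd_in_set[OF wne] by auto
    show False
    proof (rule ecases[OF ab(1)])
      assume "(a,b) \<in> edges L1 \<union> edges L2"
      then show False using int132[of a b "hd wl"] hw1 ab hdu unfolding hf_def by auto
    next
      fix x y assume xy: "(x,y) \<in> edges wl" "a = lf x" "b = hf y"
      have h1: "hd wl < y" using hf_less[OF hw1 we(2)[OF xy(1)]] ab hdu xy by simp
      have "\<not> x < y" using edgecond[OF we(1,2,5,6,7)[OF xy(1)]] ab xy unfolding lf_def hf_def by simp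
      then have "y < x" using we(5)[OF xy(1)] by simp
      with h1 show False using n132 xy(1) unfolding L132_def by blast
    qed
  qed
  moreover have "\<not> Lblock ul"
  proof
    assume "Lblock ul"
    then obtain as bs cs a b where sp: "ul = as @ bs @ cs" and l2: "2 \<le> length bs" and lb: "length bs < length ul"
      and sb: "set bs = {a..b}" unfolding Lblock_def by blast
    have dbs: "distinct bs" using du sp by simp
    have cbs: "card (set bs) = length bs" using distinct_card[OF dbs] .
    have sbu: "set bs \<subseteq> {1..m+2}" using su sp by auto
    have ebs: "edges bs \<subseteq> edges ul" using sp edges_sub by blast
    have fo: "filter old (as @ bs @ cs) = map tau wl" using filter_old_ul[OF s] sp unfolding ul_def by simp
    obtain as' bs' cs' where sp': "wl = as' @ bs' @ cs'" and mb: "map tau bs' = filter old bs"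
      using filter_sublist[OF fo] by blast
    have setbs': "set bs' = {x\<in>{1..m}. a \<le> tau x \<and> tau x \<le> b}"
    proof
      show "set bs' \<subseteq> {x\<in>{1..m}. a \<le> tau x \<and> tau x \<le> b}"
      proof
        fix x assume x: "x \<in> set bs'"
        then have "tau x \<in> set (filter old bs)" using mb by (metis image_eqI list.set_map)
        then have "tau x \<in> {a..b}" using sb by auto
        moreover have "x \<in> {1..m}" using x sp' s by auto
        ultimately show "x \<in> {x\<in>{1..m}. a \<le> tau x \<and> tau x \<le> b}" by auto
      qed
      show "{x\<in>{1..m}. a \<le> tau x \<and> tau x \<le> b} \<subseteq> set bs'"
      proof
        fix x assume x: "x \<in> {x\<in>{1..m}. a \<le> tau x \<and> tau x \<le> b}"
        then have "tau x \<in> set (filter old bs)" using sb old_tau by auto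
        then have "tau x \<in> tau ` set bs'" using mb by (metis list.set_map)
        then obtain x' where x': "x' \<in> set bs'" "tau x' = tau x" by auto
        have x'1: "x' \<in> {1..m}" using x' sp' s by auto
        have x1: "x \<in> {1..m}" using x by simp
        have "x' = x" by (metis less_irrefl linorder_neqE_nat tau_mono x1 x'1 x'(2))
        then show "x \<in> set bs'" using x' by simp
      qed
    qed
    obtain lo hi where lohi: "set bs' = {lo..hi}"
    proof -
      have "\<exists>lo hi. {x\<in>{1..m}. a \<le> tau x \<and> tau x \<le> b} = {lo..hi}"
        by (rule mono_interval) (rule tau_mono)
      then show ?thesis using that setbs' by auto
    qed
    have "\<not> (2 \<le> length bs' \<and> length bs' < m)"
    proof
      assume "2 \<le> length bs' \<and> length bs' < m"
      then have "Lblock wl" unfolding Lblock_def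
        by (intro exI[of _ as'] exI[of _ bs'] exI[of _ cs']) (use lohi lw sp' in auto)
      then show False using nb by blast
    qed
    moreover have "length bs' \<le> m" using sp' lw by auto
    ultimately consider "length bs' = m" | "length bs' \<le> 1" by linarith
    then show False
    proof cases
      case 1
      then have "as' = []" "cs' = []" using sp' lw by auto
      then have "bs' = wl" using sp' by simp
      then have st: "tau ` {1..m} = set (filter old bs)" using mb s by (metis list.set_map)
      have "1 \<in> {1..m}" "m \<in> {1..m}" using m3 by auto
      then have "tau 1 \<in> set (filter old bs)" "tau m \<in> set (filter old bs)" using st by blast+
      then have t1bs: "t1 \<in> set bs" and mbs: "m + 2 \<in> set bs" using m3 by (auto simp: tau_def)
      have sub: "{t1..m+2} \<subseteq> set bs" using sb t1bs mbs by auto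
      have lbs: "length bs < m + 2" using lb lu by simp
      have nall: "\<not> {1..m+2} \<subseteq> set bs"
      proof
        assume "{1..m+2} \<subseteq> set bs"
        then have "card {1..m+2} \<le> card (set bs)" by (intro card_mono) auto
        then show False using cbs lbs by simp
      qed
      from tcase show False
      proof
        assume "t1 = 1" then show False using sub nall by simp
      next
        assume "t1 = 2 \<and> (\<exists>p s. (p,1) \<in> edges L1 \<union> edges L2 \<and> (1,s) \<in> edges L1 \<union> edges L2)"
        then obtain p q where t2: "t1 = 2" and pq: "(p,1) \<in> edges L1 \<union> edges L2" "(1,q) \<in> edges L1 \<union> edges L2" by blast
        have pqu: "(p,1) \<in> edges ul" "(1,q) \<in> edges ul" using pq E by auto
        have "p \<in> set ul" "q \<in> set ul" "p \<noteq> 1" "q \<noteq> 1"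
          using edges_set[OF pqu(1)] edges_set[OF pqu(2)] edges_distinct_neq[OF du pqu(1)] edges_distinct_neq[OF du pqu(2)] by auto
        then have "p \<in> set bs" "q \<in> set bs" using su sub t2 by auto
        then have "1 \<in> set bs" using positional[of as bs cs p 1 q] du pqu sp by simp
        then have "{1..m+2} \<subseteq> set bs"
        proof -
          assume one: "1 \<in> set bs"
          show ?thesis
          proof
            fix x assume "x \<in> {1..m+2}" then show "x \<in> set bs" using one sub t2 by (cases "x = 1") auto
          qed
        qed
        then show False using nall by blast
      qed
    next
      case 2
      have f1: "length (filter old bs) \<le> 1" using mb 2 by (metis length_map)
      have t14: "t1 \<in> {1..4}" "t2 \<in> {1..4}" using t1_ge t12 t2_le by auto
      have "set (filter (\<lambda>v. \<not> old v) bs) \<subseteq> {1..4} - {t1,t2}" using sbu unfolding old_def by auto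
      moreover have "card ({1..4} - {t1,t2}) = 2"
      proof -
        have "card ({1..4::nat} - {t1,t2}) = card {1..4::nat} - card {t1,t2}" using t14 by (intro card_Diff_subset) auto
        then show ?thesis using t12 by simp
      qed
      ultimately have "card (set (filter (\<lambda>v. \<not> old v) bs)) \<le> 2" by (metis card_mono finite_Diff finite_atLeastAtMost)
      then have f2: "length (filter (\<lambda>v. \<not> old v) bs) \<le> 2" using distinct_card[of "filter (\<lambda>v. \<not> old v) bs"] dbs by simp
      have l3: "length bs \<le> 3" using f1 f2 sum_length_filter_compl[of old bs] by linarith
      have cab: "Suc b - a = length bs" using cbs sb by simp
      have op: "old v1 \<and> old v2" if e: "(v1,v2) \<in> edges ul" and c: "v2 = v1 + 1 \<or> v1 = v2 + 1" for v1 v2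
      proof (rule ecases[OF e])
        assume "(v1,v2) \<in> edges L1 \<union> edges L2"
        then show ?thesis using sb_int c unfolding old_def by blast
      next
        fix x y assume xy: "(x,y) \<in> edges wl" "v1 = lf x" "v2 = hf y"
        show ?thesis using sb_ext[OF we(1,2,5,6,7)[OF xy(1)]] c xy unfolding old_def lf_def hf_def by auto
      qed
      consider "length bs = 2" | "length bs = 3" using l2 l3 by linarith
      then show False
      proof cases
        case 1
        then obtain a1 a2 where bs: "bs = [a1,a2]" by (auto simp: length_Suc_conv numeral_2_eq_2)
        have e: "(a1,a2) \<in> edges ul" using ebs bs by auto
        have "a1 \<in> {a..b}" "a2 \<in> {a..b}" "a1 \<noteq> a2" using sb bs dbs by auto
        then have "a2 = a1 + 1 \<or> a1 = a2 + 1" using cab 1 by auto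
        then have "old a1 \<and> old a2" using op e by blast
        then show False using f1 bs by simp
      next
        case 2
        then obtain a1 a2 a3 where bs: "bs = [a1,a2,a3]" by (auto simp: length_Suc_conv numeral_3_eq_3)
        have e: "(a1,a2) \<in> edges ul" "(a2,a3) \<in> edges ul" using ebs bs by auto
        have "a1 \<in> {a..b}" "a2 \<in> {a..b}" "a3 \<in> {a..b}" "a1 \<noteq> a2" "a2 \<noteq> a3" "a1 \<noteq> a3" using sb bs dbs by auto
        then have "(a2 = a1 + 1 \<or> a1 = a2 + 1) \<or> (a3 = a2 + 1 \<or> a2 = a3 + 1)" using cab 2 by auto
        then have "(old a1 \<and> old a2) \<or> (old a2 \<and> old a3)" using op e by blast
        then show False using f1 bs by (auto split: if_splits)
      qed
    qed
  qed
  ultimately show ?thesis using du su unfolding ul_def by blast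
qed

end




interpretation mB: mapdata "[1,3]" "[2,4]" 1 2
  by unfold_locales (auto simp: FF_def nest_def)
interpretation mA: mapdata "[3,1]" "[4,2]" 1 2
  by unfold_locales (auto simp: FF_def nest_def)
interpretation mC: mapdata "[2]" "[3,1,4]" 2 4
  by unfold_locales (auto simp: FF_def nest_def)
interpretation mD: mapdata "[2]" "[4,1,3]" 2 3
  by unfold_locales (auto simp: FF_def nest_def)

definition TT :: "nat \<Rightarrow> (nat \<Rightarrow> nat) set" where
  "TT m = {w \<in> A_set m. simple_perm m w}"

lemma TT_wlist:
  assumes "w \<in> TT m" "1 \<le> m"
  shows "w permutes {1..m}" "distinct (wlist m w)" "set (wlist m w) = {1..m}" "\<not> L4 (wlist m w)"
    "\<not> L231 (wlist m w)" "\<not> L132 (wlist m w)" "\<not> Lblock (wlist m w)"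
proof -
  have w: "w permutes {1..m}" "\<not> contains_3241 m w" "\<not> contains_1423 m w" "\<not> contains_4132 m w" "\<not> contains_2314 m w"
    "\<not> contains_231 m w" "\<not> contains_132 m w" "simple_perm m w"
    using assms(1) unfolding TT_def A_set_def by auto
  show "w permutes {1..m}" using w(1) .
  show "distinct (wlist m w)" using wlist_distinct[OF w(1)] .
  show "set (wlist m w) = {1..m}" using wlist_set[OF w(1)] .
  show "\<not> L4 (wlist m w)" using L4_iff w by blast
  show "\<not> L231 (wlist m w)" using L231_iff[OF assms(2)] w by blast
  show "\<not> L132 (wlist m w)" using L132_iff[OF assms(2)] w by blast
  show "\<not> Lblock (wlist m w)" using simple_iff w by blast
qed

lemma list_TT:
  assumes "distinct ul" "set ul = {1..n}" "length ul = n" "1 \<le> n" "\<not> L4 ul" "\<not> L231 ul" "\<not> L132 ul" "\<not> Lblock ul"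
  shows "fun_of ul \<in> TT n"
proof -
  have p: "fun_of ul permutes {1..n}" using fun_of_permutes[of ul] assms by simp
  have wl: "wlist n (fun_of ul) = ul" using wlist_fun_of[of ul] assms(3) by simp
  show ?thesis unfolding TT_def A_set_def
    using p L4_iff[of n "fun_of ul"] L231_iff[OF assms(4), of "fun_of ul"] L132_iff[OF assms(4), of "fun_of ul"]
      simple_iff[of n "fun_of ul"] assms(5-8) wl by auto
qed

lemma fun_of_inj: "length xs = n \<Longrightarrow> length ys = n \<Longrightarrow> fun_of xs = fun_of ys \<Longrightarrow> xs = ys"
  by (metis wlist_fun_of)



lemma concat_map_inj:
  assumes "\<forall>x\<in>set xs. \<forall>y\<in>set ys. hd (f x) = hd (f y) \<longrightarrow> x = y" "\<forall>x. f x \<noteq> []"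
    "concat (map f xs) = concat (map f ys)"
  shows "xs = ys"
  using assms
proof (induction xs arbitrary: ys)
  case Nil
  show ?case
  proof (cases ys)
    case (Cons y ys')
    then have "concat (map f ys) \<noteq> []" using Nil.prems(2) by simp
    then show ?thesis using Nil.prems(3) by simp
  qed simp
next
  case (Cons x xs)
  show ?case
  proof (cases ys)
    case Nil then show ?thesis using Cons.prems(2,3) by simp
  next
    case (Cons y ys')
    have eq: "f x @ concat (map f xs) = f y @ concat (map f ys')" using Cons Cons.prems(3) by simp
    have fx: "f x \<noteq> []" "f y \<noteq> []" using Cons.prems(2) by blast+
    have "hd (f x) = hd (f y)" using arg_cong[OF eq, of hd] fx by simp
    then have xy: "x = y" using Cons.prems(1) Cons by simp
    then have "concat (map f xs) = concat (map f ys')" using eq by simp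
    moreover have "\<forall>x\<in>set xs. \<forall>y\<in>set ys'. hd (f x) = hd (f y) \<longrightarrow> x = y" using Cons.prems(1) Cons by simp
    ultimately have "xs = ys'" using Cons.IH[of ys'] Cons.prems(2) by blast
    then show ?thesis using xy Cons by simp
  qed
qed

lemma edge_antisym: "distinct xs \<Longrightarrow> (a,b) \<in> edges xs \<Longrightarrow> (b,a) \<in> edges xs \<Longrightarrow> False"
proof -
  assume d: "distinct xs" and e1: "(a,b) \<in> edges xs" and e2: "(b,a) \<in> edges xs"
  obtain k where k: "Suc k < length xs" "xs!k = a" "xs!Suc k = b" using e1 edges_nth by blast
  obtain j where j: "Suc j < length xs" "xs!j = b" "xs!Suc j = a" using e2 edges_nth by blast
  have "j = Suc k" using nth_eq_iff_index_eq[OF d, of j "Suc k"] k j by simp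
  moreover have "k = Suc j" using nth_eq_iff_index_eq[OF d, of k "Suc j"] k j by simp
  ultimately show False by simp
qed

lemma edge_pred_unique: "distinct xs \<Longrightarrow> (a,c) \<in> edges xs \<Longrightarrow> (b,c) \<in> edges xs \<Longrightarrow> a = b"
proof -
  assume d: "distinct xs" and e1: "(a,c) \<in> edges xs" and e2: "(b,c) \<in> edges xs"
  obtain k where k: "Suc k < length xs" "xs!k = a" "xs!Suc k = c" using e1 edges_nth by blast
  obtain j where j: "Suc j < length xs" "xs!j = b" "xs!Suc j = c" using e2 edges_nth by blast
  have "Suc j = Suc k" using nth_eq_iff_index_eq[OF d, of "Suc j" "Suc k"] k j by simp
  then have "j = k" by simp
  then show "a = b" using k j by simp
qed

lemma edge_succ_unique: "distinct xs \<Longrightarrow> (a,b) \<in> edges xs \<Longrightarrow> (a,c) \<in> edges xs \<Longrightarrow> b = c"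
proof -
  assume d: "distinct xs" and e1: "(a,b) \<in> edges xs" and e2: "(a,c) \<in> edges xs"
  obtain k where k: "Suc k < length xs" "xs!k = a" "xs!Suc k = b" using e1 edges_nth by blast
  obtain j where j: "Suc j < length xs" "xs!j = a" "xs!Suc j = c" using e2 edges_nth by blast
  have "j = k" using nth_eq_iff_index_eq[OF d, of j k] k j by simp
  then show "b = c" using k j by simp
qed




context mapdata
begin

definition Phi :: "nat \<Rightarrow> (nat \<Rightarrow> nat) \<Rightarrow> (nat \<Rightarrow> nat)" where
  "Phi m w = fun_of (concat (map F (wlist m w)))"

lemma Phi_list:
  assumes "w \<in> TT m" "3 \<le> m"
  shows "distinct (concat (map F (wlist m w)))" "set (concat (map F (wlist m w))) = {1..m+2}"
    "length (concat (map F (wlist m w))) = m + 2"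
    "edges (concat (map F (wlist m w))) = edges L1 \<union> edges L2 \<union> {(lf x, hf y) | x y. (x,y) \<in> edges (wlist m w)}"
proof -
  note t = TT_wlist[OF assms(1)] 
  have m1: "1 \<le> m" using assms by simp
  note mm = main_map[OF t(2,3)[OF m1] assms(2) t(4,5,6,7)[OF m1]]
  show "distinct (concat (map F (wlist m w)))" "set (concat (map F (wlist m w))) = {1..m+2}" using mm by auto
  then show "length (concat (map F (wlist m w))) = m + 2" using distinct_card by fastforce
  show "edges (concat (map F (wlist m w))) = edges L1 \<union> edges L2 \<union> {(lf x, hf y) | x y. (x,y) \<in> edges (wlist m w)}"
    using edges_ul[OF t(3)[OF m1] assms(2)] .
qed

lemma Phi_TT:
  assumes "w \<in> TT m" "3 \<le> m"
  shows "Phi m w \<in> TT (m+2)"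
proof -
  note t = TT_wlist[OF assms(1)] 
  have m1: "1 \<le> m" using assms by simp
  note mm = main_map[OF t(2,3)[OF m1] assms(2) t(4,5,6,7)[OF m1]]
  show ?thesis unfolding Phi_def using list_TT[of _ "m+2"] mm Phi_list[OF assms] by simp
qed

lemma Phi_inj:
  assumes "3 \<le> m" shows "inj_on (Phi m) (TT m)"
proof (rule inj_onI)
  fix w1 w2 assume w: "w1 \<in> TT m" "w2 \<in> TT m" "Phi m w1 = Phi m w2"
  have "concat (map F (wlist m w1)) = concat (map F (wlist m w2))"
    using fun_of_inj Phi_list(3)[OF w(1) assms] Phi_list(3)[OF w(2) assms] w(3) unfolding Phi_def by blast
  moreover have "\<And>x y. x \<in> set (wlist m w1) \<Longrightarrow> y \<in> set (wlist m w2) \<Longrightarrow> hd (F x) = hd (F y) \<Longrightarrow> x = y"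
  proof -
    fix x y assume "x \<in> set (wlist m w1)" "y \<in> set (wlist m w2)" "hd (F x) = hd (F y)"
    then have "1 \<le> x" "1 \<le> y" "hf x = hf y" using TT_wlist(3)[OF w(1)] TT_wlist(3)[OF w(2)] assms unfolding hf_def by auto
    then show "x = y" using hf_less[of x y] hf_less[of y x] by (metis less_irrefl linorder_neqE_nat)
  qed
  ultimately have "wlist m w1 = wlist m w2" using concat_map_inj[of "wlist m w1" "wlist m w2" F] F_ne by blast
  then show "w1 = w2" using wlist_inj TT_wlist(1)[OF w(1)] TT_wlist(1)[OF w(2)] assms by simp
qed

end


lemma TT_edge:
  assumes "w \<in> TT m" "3 \<le> m" "(x,y) \<in> edges (wlist m w)"
  shows "y \<noteq> x + 1" "x \<noteq> y + 1"
proof -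
  have m1: "1 \<le> m" using assms by simp
  note t = TT_wlist[OF assms(1) m1]
  show "y \<noteq> x + 1" "x \<noteq> y + 1" using mB.wl_edge[OF t(2,3) assms(2) t(7) assms(3)] by auto
qed

lemma lists_eq:
  assumes "fun_of xs = fun_of ys" "length xs = n" "length ys = n"
  shows "xs = ys" using fun_of_inj assms by blast

lemma disj_BA: assumes "w1 \<in> TT m" "w2 \<in> TT m" "3 \<le> m" shows "mB.Phi m w1 \<noteq> mA.Phi m w2"
proof
  assume eq: "mB.Phi m w1 = mA.Phi m w2"
  have L: "concat (map (FF [1,3] [2,4]) (wlist m w1)) = concat (map (FF [3,1] [4,2]) (wlist m w2))"
    using lists_eq[OF eq[unfolded mB.Phi_def mA.Phi_def] mB.Phi_list(3)[OF assms(1,3)] mA.Phi_list(3)[OF assms(2,3)]] .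
  have "(1,3) \<in> edges (concat (map (FF [1,3] [2,4]) (wlist m w1)))" using mB.Phi_list(4)[OF assms(1,3)] by simp
  moreover have "(3,1) \<in> edges (concat (map (FF [1,3] [2,4]) (wlist m w1)))" using mA.Phi_list(4)[OF assms(2,3)] L by simp
  ultimately show False using edge_antisym mB.Phi_list(1)[OF assms(1,3)] by blast
qed

lemma disj_BC: assumes "w1 \<in> TT m" "w2 \<in> TT m" "3 \<le> m" shows "mB.Phi m w1 \<noteq> mC.Phi m w2"
proof
  assume eq: "mB.Phi m w1 = mC.Phi m w2"
  have L: "concat (map (FF [1,3] [2,4]) (wlist m w1)) = concat (map (FF [2] [3,1,4]) (wlist m w2))"
    using lists_eq[OF eq[unfolded mB.Phi_def mC.Phi_def] mB.Phi_list(3)[OF assms(1,3)] mC.Phi_list(3)[OF assms(2,3)]] .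
  have "(1,3) \<in> edges (concat (map (FF [1,3] [2,4]) (wlist m w1)))" using mB.Phi_list(4)[OF assms(1,3)] by simp
  moreover have "(1,4) \<in> edges (concat (map (FF [1,3] [2,4]) (wlist m w1)))" using mC.Phi_list(4)[OF assms(2,3)] L by simp
  ultimately show False using edge_succ_unique mB.Phi_list(1)[OF assms(1,3)] by fastforce
qed

lemma disj_AD: assumes "w1 \<in> TT m" "w2 \<in> TT m" "3 \<le> m" shows "mA.Phi m w1 \<noteq> mD.Phi m w2"
proof
  assume eq: "mA.Phi m w1 = mD.Phi m w2"
  have L: "concat (map (FF [3,1] [4,2]) (wlist m w1)) = concat (map (FF [2] [4,1,3]) (wlist m w2))"
    using lists_eq[OF eq[unfolded mA.Phi_def mD.Phi_def] mA.Phi_list(3)[OF assms(1,3)] mD.Phi_list(3)[OF assms(2,3)]] .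
  have "(3,1) \<in> edges (concat (map (FF [3,1] [4,2]) (wlist m w1)))" using mA.Phi_list(4)[OF assms(1,3)] by simp
  moreover have "(4,1) \<in> edges (concat (map (FF [3,1] [4,2]) (wlist m w1)))" using mD.Phi_list(4)[OF assms(2,3)] L by simp
  ultimately show False using edge_pred_unique mA.Phi_list(1)[OF assms(1,3)] by fastforce
qed

lemma disj_CD: assumes "w1 \<in> TT m" "w2 \<in> TT m" "3 \<le> m" shows "mC.Phi m w1 \<noteq> mD.Phi m w2"
proof
  assume eq: "mC.Phi m w1 = mD.Phi m w2"
  have L: "concat (map (FF [2] [3,1,4]) (wlist m w1)) = concat (map (FF [2] [4,1,3]) (wlist m w2))"
    using lists_eq[OF eq[unfolded mC.Phi_def mD.Phi_def] mC.Phi_list(3)[OF assms(1,3)] mD.Phi_list(3)[OF assms(2,3)]] .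
  have "(3,1) \<in> edges (concat (map (FF [2] [3,1,4]) (wlist m w1)))" using mC.Phi_list(4)[OF assms(1,3)] by simp
  moreover have "(4,1) \<in> edges (concat (map (FF [2] [3,1,4]) (wlist m w1)))" using mD.Phi_list(4)[OF assms(2,3)] L by simp
  ultimately show False using edge_pred_unique mC.Phi_list(1)[OF assms(1,3)] by fastforce
qed

lemma disj_BD: assumes "w1 \<in> TT m" "w2 \<in> TT m" "3 \<le> m" shows "mB.Phi m w1 \<noteq> mD.Phi m w2"
proof
  assume eq: "mB.Phi m w1 = mD.Phi m w2"
  have L: "concat (map (FF [1,3] [2,4]) (wlist m w1)) = concat (map (FF [2] [4,1,3]) (wlist m w2))"
    using lists_eq[OF eq[unfolded mB.Phi_def mD.Phi_def] mB.Phi_list(3)[OF assms(1,3)] mD.Phi_list(3)[OF assms(2,3)]] .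
  have "(4,1) \<in> edges (concat (map (FF [1,3] [2,4]) (wlist m w1)))" using mD.Phi_list(4)[OF assms(2,3)] L by simp
  then obtain x y where xy: "(x,y) \<in> edges (wlist m w1)" "mB.lf x = 4" "mB.hf y = 1"
    using mB.Phi_list(4)[OF assms(1,3)] by auto
  have "x = 2" "y = 1" using xy(2,3) unfolding mB.lf_def mB.hf_def FF_def by (auto split: if_splits)
  then show False using TT_edge[OF assms(1,3) xy(1)] by simp
qed

lemma disj_AC: assumes "w1 \<in> TT m" "w2 \<in> TT m" "3 \<le> m" shows "mA.Phi m w1 \<noteq> mC.Phi m w2"
proof
  assume eq: "mA.Phi m w1 = mC.Phi m w2"
  have L: "concat (map (FF [3,1] [4,2]) (wlist m w1)) = concat (map (FF [2] [3,1,4]) (wlist m w2))"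
    using lists_eq[OF eq[unfolded mA.Phi_def mC.Phi_def] mA.Phi_list(3)[OF assms(1,3)] mC.Phi_list(3)[OF assms(2,3)]] .
  have "(1,4) \<in> edges (concat (map (FF [3,1] [4,2]) (wlist m w1)))" using mC.Phi_list(4)[OF assms(2,3)] L by simp
  then obtain x y where xy: "(x,y) \<in> edges (wlist m w1)" "mA.lf x = 1" "mA.hf y = 4"
    using mA.Phi_list(4)[OF assms(1,3)] by auto
  have "x = 1" "y = 2" using xy(2,3) unfolding mA.lf_def mA.hf_def FF_def by (auto split: if_splits)
  then show False using TT_edge[OF assms(1,3) xy(1)] by simp
qed

lemma finite_TT: "finite (TT m)"
proof -
  have "TT m \<subseteq> {p. p permutes {1..m}}" unfolding TT_def A_set_def by auto
  then show ?thesis using finite_permutations[of "{1..m}"] finite_subset by blast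
qed

lemma count_TT:
  assumes m3: "3 \<le> m"
  shows "4 * card (TT m) \<le> card (TT (m+2))"
proof -
  define S where "S = TT m"
  define IB where "IB = mB.Phi m ` S"
  define IA where "IA = mA.Phi m ` S"
  define IC where "IC = mC.Phi m ` S"
  define ID where "ID = mD.Phi m ` S"
  have fS: "finite S" unfolding S_def using finite_TT .
  have cB: "card IB = card S" unfolding IB_def S_def using card_image mB.Phi_inj[OF m3] by blast
  have cA: "card IA = card S" unfolding IA_def S_def using card_image mA.Phi_inj[OF m3] by blast
  have cC: "card IC = card S" unfolding IC_def S_def using card_image mC.Phi_inj[OF m3] by blast
  have cD: "card ID = card S" unfolding ID_def S_def using card_image mD.Phi_inj[OF m3] by blast
  have fin: "finite IB" "finite IA" "finite IC" "finite ID" unfolding IB_def IA_def IC_def ID_def using fS by auto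
  have dBA: "IB \<inter> IA = {}" unfolding IB_def IA_def S_def using disj_BA[OF _ _ m3] by blast
  have dBC: "IB \<inter> IC = {}" unfolding IB_def IC_def S_def using disj_BC[OF _ _ m3] by blast
  have dBD: "IB \<inter> ID = {}" unfolding IB_def ID_def S_def using disj_BD[OF _ _ m3] by blast
  have dAC: "IA \<inter> IC = {}" unfolding IA_def IC_def S_def using disj_AC[OF _ _ m3] by blast
  have dAD: "IA \<inter> ID = {}" unfolding IA_def ID_def S_def using disj_AD[OF _ _ m3] by blast
  have dCD: "IC \<inter> ID = {}" unfolding IC_def ID_def S_def using disj_CD[OF _ _ m3] by blast
  have "card (IB \<union> IA \<union> IC \<union> ID) = card (IB \<union> IA \<union> IC) + card ID"
    using dBD dAD dCD fin by (intro card_Un_disjoint) auto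
  also have "card (IB \<union> IA \<union> IC) = card (IB \<union> IA) + card IC"
    using dBC dAC fin by (intro card_Un_disjoint) auto
  also have "card (IB \<union> IA) = card IB + card IA"
    using dBA fin by (intro card_Un_disjoint) auto
  finally have cu: "card (IB \<union> IA \<union> IC \<union> ID) = 4 * card S" using cB cA cC cD by simp
  have "IB \<union> IA \<union> IC \<union> ID \<subseteq> TT (m+2)"
    unfolding IB_def IA_def IC_def ID_def S_def
    using mB.Phi_TT[OF _ m3] mA.Phi_TT[OF _ m3] mC.Phi_TT[OF _ m3] mD.Phi_TT[OF _ m3] by blast
  then have "card (IB \<union> IA \<union> IC \<union> ID) \<le> card (TT (m+2))" using finite_TT card_mono by blast
  then show ?thesis using cu unfolding S_def by simp
qed

theorem mainTheorem17:
  fixes n :: nat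
  assumes "n \<ge> 5"
  shows "s_seq n \<ge> 4 * s_seq (n - 2)"
proof -
  have s: "s_seq k = card (TT k)" for k unfolding s_seq_def TT_def by simp
  have "4 * card (TT (n-2)) \<le> card (TT (n - 2 + 2))" using count_TT[of "n-2"] assms by simp
  moreover have "n - 2 + 2 = n" using assms by simp
  ultimately show ?thesis using s by simp
qed


end
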